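(* Let $k_1,k_2$ be natural numbers with $k_2>k_1$, let $\alpha>0$, and let $f(t)=\sum_{k\ge1}f_kt^k$ (with $f_1\neq0$) be a Pólya frequency power series. If for some positive integer $n$ it holds that $\alpha^{k_2-k_1}f_{k_1-n+1}>f_{k_2-n+1}$ (where $f_j=0$ for $j\le0$), then the quasi-Riordan array $\left[\frac1{1-\alpha t},f(t)\right]$ is not totally positive, although both $\frac1{1-\alpha t}$ and $f(t)$ are Pólya frequency power series.
   Context: For formal power series $g(t)=\sum_{n\ge0}g_nt^n$ with $g_0=1$ and $f(t)=\sum_{n\ge1}f_nt^n$ with $f_1\ne0$, the quasi-Riordan array $[g,f]$ is the infinite lower triangular matrix $(r_{n,k})_{n,k\ge0}$ with $r_{n,0}=g_n$ and $r_{n,k}=f_{n-k+1}$ for $k\ge1$ (with $f_j=0$ for $j\le0$), i.e. its columns have generating functions $g,f,tf,t^2f,\dots$. An infinite matrix is totally positive (TP) if all its minors are nonnegative. A sequence $(a_n)_{n\ge0}$ of nonnegative reals is a Pólya frequency sequence if its Toeplitz matrix $[a_{i-j}]_{i,j\ge0}$ (with $a_m=0$ for $m<0$) is TP; a formal power series is a Pólya frequency power series if its coefficient sequence is a Pólya frequency sequence. *)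

theory Defs
  imports "HOL-Computational_Algebra.Formal_Power_Series" "Jordan_Normal_Form.Determinant"
begin

definition totally_positive :: "(nat \<Rightarrow> nat \<Rightarrow> real) \<Rightarrow> bool" where
  "totally_positive M \<longleftrightarrow>
     (\<forall>m (r :: nat \<Rightarrow> nat) (c :: nat \<Rightarrow> nat).
        strict_mono_on {..<m} r \<longrightarrow> strict_mono_on {..<m} c \<longrightarrow>
        det (mat m m (\<lambda>(i, j). M (r i) (c j))) \<ge> 0)"

definition toeplitz :: "(nat \<Rightarrow> real) \<Rightarrow> nat \<Rightarrow> nat \<Rightarrow> real" where
  "toeplitz a i j = (if j \<le> i then a (i - j) else 0)"

definition PF_seq :: "(nat \<Rightarrow> real) \<Rightarrow> bool" where
  "PF_seq a \<longleftrightarrow> (\<forall>n. a n \<ge> 0) \<and> totally_positive (toeplitz a)"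

definition PF_fps :: "real fps \<Rightarrow> bool" where
  "PF_fps F \<longleftrightarrow> PF_seq (fps_nth F)"

definition quasi_riordan :: "real fps \<Rightarrow> real fps \<Rightarrow> nat \<Rightarrow> nat \<Rightarrow> real" where
  "quasi_riordan g f n k =
     (if k = 0 then fps_nth g n else if k \<le> n + 1 then fps_nth f (n + 1 - k) else 0)"

definition coeff_int :: "real fps \<Rightarrow> int \<Rightarrow> real" where
  "coeff_int f j = (if j \<le> 0 then 0 else fps_nth f (nat j))"

end

theory Submission
  imports Defs
begin

lemma det01_nonneg:
  fixes r c :: "nat \<Rightarrow> nat" shows "strict_mono_on {..<m} r \<Longrightarrow> strict_mono_on {..<m} c \<Longrightarrow>
   det (mat m m (\<lambda>(i,j). if c j \<le> r i then 1 else 0 :: real)) \<ge> 0"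
proof (induction m arbitrary: r c)
  case 0
  then show ?case by simp
next
  case (Suc m)
  define A where "A = mat (Suc m) (Suc m) (\<lambda>(i,j). if c j \<le> r i then 1 else 0 :: real)"
  have A: "A \<in> carrier_mat (Suc m) (Suc m)" unfolding A_def by simp
  have cmono: "c i < c j" if "i < j" "j < Suc m" for i j
    using Suc.prems(2) that unfolding strict_mono_on_def by auto
  have rmono: "r i < r j" if "i < j" "j < Suc m" for i j
    using Suc.prems(1) that unfolding strict_mono_on_def by auto
  have rle: "r 0 \<le> r i" if "i < Suc m" for i using rmono[of 0 i] that by (cases i) auto
  have cle: "c 0 \<le> c i" if "i < Suc m" for i using cmono[of 0 i] that by (cases i) auto
  have lap: "det A = (\<Sum>j<Suc m. A $$ (0,j) * cofactor A 0 j)"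
    by (rule laplace_expansion_row[OF A]) simp
  show ?case
  proof (cases "r 0 < c 0")
    case True
    have "A $$ (0,j) = 0" if "j < Suc m" for j using cle[OF that] True that unfolding A_def by auto
    then have "det A = 0" unfolding lap by simp
    then show ?thesis unfolding A_def by simp
  next
    case F: False
    show ?thesis
    proof (cases "m \<ge> 1 \<and> c 1 \<le> r 0")
      case True
      have "col A 0 = col A 1"
      proof (rule eq_vecI)
        fix i assume "i < dim_vec (col A 1)"
        then have i: "i < Suc m" unfolding A_def by simp
        have "c 0 < c 1" using cmono[of 0 1] True by simp
        then have "c 0 \<le> r i" "c 1 \<le> r i" using True rle[OF i] by linarith+
        then show "col A 0 $ i = col A 1 $ i" using i True unfolding A_def by simp
      qed (simp add: A_def)
      then have "det A = 0" by (intro det_identical_columns[OF A, of 0 1]) (use True in auto)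
      then show ?thesis unfolding A_def by simp
    next
      case False
      have z: "A $$ (0,j) = 0" if "j < Suc m" "j \<noteq> 0" for j
      proof -
        have "c 1 \<le> c j" using cmono[of 1 j] that by (cases "j = 1") auto
        then show ?thesis using False that unfolding A_def by auto
      qed
      have "(\<Sum>j<Suc m. A $$ (0,j) * cofactor A 0 j) = A $$ (0,0) * cofactor A 0 0"
        by (subst sum.lessThan_Suc_shift) (simp add: z)
      also have "\<dots> = det (mat_delete A 0 0)" using F unfolding A_def cofactor_def by simp
      also have "mat_delete A 0 0 = mat m m (\<lambda>(i,j). if c (Suc j) \<le> r (Suc i) then 1 else 0 :: real)"
        unfolding A_def mat_delete_def by (rule eq_matI) auto
      finally have "det A = det (mat m m (\<lambda>(i,j). if c (Suc j) \<le> r (Suc i) then 1 else 0 :: real))"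
        using lap by simp
      also have "\<dots> \<ge> 0"
        by (rule Suc.IH) (auto simp: strict_mono_on_def intro!: cmono rmono)
      finally show ?thesis unfolding A_def by simp
    qed
  qed
qed

lemma det_scale:
  "det (mat n n (\<lambda>(i,j). x i * y j * b i j)) = (\<Prod>i<n. x i) * (\<Prod>j<n. y j) * det (mat n n (\<lambda>(i,j). b i j :: 'a::comm_ring_1))"
proof -
  have "det (mat n n (\<lambda>(i,j). x i * y j * b i j)) =
     (\<Sum>p\<in>{p. p permutes {0..<n}}. signof p * ((\<Prod>i=0..<n. x i) * (\<Prod>i=0..<n. y (p i)) * (\<Prod>i=0..<n. b i (p i))))"
    by (subst det_def'[of _ n]) (auto intro!: sum.cong simp: prod.distrib)
  also have "\<dots> = (\<Sum>p\<in>{p. p permutes {0..<n}}. (\<Prod>i=0..<n. x i) * (\<Prod>i=0..<n. y i) * (signof p * (\<Prod>i=0..<n. b i (p i))))"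
    by (intro sum.cong refl) (simp add: prod.permute[symmetric, of _ "{0..<n}", simplified comp_def] mult_ac)
  also have "\<dots> = (\<Prod>i<n. x i) * (\<Prod>j<n. y j) * det (mat n n (\<lambda>(i,j). b i j))"
    by (subst det_def'[of _ n]) (auto simp: sum_distrib_left atLeast0LessThan intro!: sum.cong)
  finally show ?thesis .
qed

lemma det1: "det (mat 1 1 (\<lambda>(i,j). M i j)) = (M 0 0 :: 'a::comm_ring_1)"
proof -
  have "det (mat 1 1 (\<lambda>(i,j). M i j)) = (\<Sum>j<1. mat 1 1 (\<lambda>(i,j). M i j) $$ (0,j) * cofactor (mat 1 1 (\<lambda>(i,j). M i j)) 0 j)"
    by (rule laplace_expansion_row) auto
  also have "\<dots> = M 0 0" by (simp add: cofactor_def mat_delete_def)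
  finally show ?thesis .
qed

lemma det2: "det (mat 2 2 (\<lambda>(i,j). M i j)) = M 0 0 * M 1 1 - M 0 1 * (M 1 0 :: 'a::comm_ring_1)"
proof -
  have "det (mat 2 2 (\<lambda>(i,j). M i j)) = (\<Sum>j<2. mat 2 2 (\<lambda>(i,j). M i j) $$ (0,j) * cofactor (mat 2 2 (\<lambda>(i,j). M i j)) 0 j)"
    by (rule laplace_expansion_row) auto
  moreover have "mat_delete (mat 2 2 (\<lambda>(i,j). M i j)) 0 0 = mat 1 1 (\<lambda>(i,j). M 1 1)"
    by (rule eq_matI) (auto simp: mat_delete_def)
  moreover have "mat_delete (mat 2 2 (\<lambda>(i,j). M i j)) 0 1 = mat 1 1 (\<lambda>(i,j). M 1 0)"
    by (rule eq_matI) (auto simp: mat_delete_def)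
  moreover have "det (mat (Suc 0) (Suc 0) (\<lambda>(i,j). M (Suc 0) (Suc 0))) = M (Suc 0) (Suc 0)"
    using det1[of "\<lambda>i j. M 1 1"] by simp
  moreover have "det (mat (Suc 0) (Suc 0) (\<lambda>(i,j). M (Suc 0) 0)) = M (Suc 0) 0"
    using det1[of "\<lambda>i j. M 1 0"] by simp
  ultimately show ?thesis
    by (simp add: cofactor_def numeral_2_eq_2)
qed

lemma geom_inv: "inverse (1 - fps_const (a::real) * fps_X) = Abs_fps (\<lambda>n. a ^ n)"
proof (rule fps_inverse_unique, rule fps_ext)
  fix n
  show "fps_nth ((1 - fps_const a * fps_X) * Abs_fps (\<lambda>n. a ^ n)) n = fps_nth 1 n"
    by (cases n) (simp_all add: algebra_simps fps_mult_left_const_nth)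
qed

lemma qr_coeff:
  assumes "fps_nth f 0 = 0" "n \<ge> 1"
  shows "quasi_riordan g f k n = coeff_int f (int k - int n + 1)"
  using assms unfolding quasi_riordan_def coeff_int_def
  by (auto simp: nat_diff_distrib' intro!: arg_cong[where f="fps_nth f"])

lemma geom_PF:
  assumes "(a::real) > 0"
  shows "PF_fps (inverse (1 - fps_const a * fps_X))"
  unfolding PF_fps_def PF_seq_def geom_inv totally_positive_def
proof (intro conjI allI impI)
  fix n show "0 \<le> fps_nth (Abs_fps (\<lambda>n. a ^ n)) n" using assms by simp
next
  fix m and r c :: "nat \<Rightarrow> nat"
  assume r: "strict_mono_on {..<m} r" and c: "strict_mono_on {..<m} c"
  have "mat m m (\<lambda>(i, j). toeplitz (fps_nth (Abs_fps (\<lambda>n. a ^ n))) (r i) (c j))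
      = mat m m (\<lambda>(i, j). a ^ (r i) * (inverse a) ^ (c j) * (if c j \<le> r i then 1 else 0))"
    using assms by (intro eq_matI) (auto simp: toeplitz_def power_diff power_inverse divide_inverse)
  also have "det \<dots> = (\<Prod>i<m. a ^ (r i)) * (\<Prod>j<m. inverse a ^ (c j)) *
      det (mat m m (\<lambda>(i, j). if c j \<le> r i then 1 else 0 :: real))"
    by (rule det_scale[where b = "\<lambda>i j. if c j \<le> r i then 1 else 0"])
  also have "\<dots> \<ge> 0"
    using assms det01_nonneg[OF r c] by (intro mult_nonneg_nonneg prod_nonneg) auto
  finally show "0 \<le> det (mat m m (\<lambda>(i, j). toeplitz (fps_nth (Abs_fps (\<lambda>n. a ^ n))) (r i) (c j)))" .
qed

theorem proposition4p1:
  fixes k1 k2 n :: nat and \<alpha> :: real and f :: "real fps"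
  assumes "k2 > k1" and "\<alpha> > 0"
    and "fps_nth f 0 = 0" and "fps_nth f 1 \<noteq> 0" and "PF_fps f"
    and "n \<ge> 1"
    and "\<alpha> ^ (k2 - k1) * coeff_int f (int k1 - int n + 1) > coeff_int f (int k2 - int n + 1)"
  shows "\<not> totally_positive (quasi_riordan (inverse (1 - fps_const \<alpha> * fps_X)) f)
         \<and> PF_fps (inverse (1 - fps_const \<alpha> * fps_X)) \<and> PF_fps f"
proof (intro conjI)
  show "PF_fps f" by fact
  show "PF_fps (inverse (1 - fps_const \<alpha> * fps_X))" by (rule geom_PF[OF assms(2)])
  define Q where "Q = quasi_riordan (inverse (1 - fps_const \<alpha> * fps_X)) f"
  define r :: "nat \<Rightarrow> nat" where "r = (\<lambda>i. if i = 0 then k1 else k2)"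
  define c :: "nat \<Rightarrow> nat" where "c = (\<lambda>i. if i = 0 then 0 else n)"
  define C1 where "C1 = coeff_int f (int k1 - int n + 1)"
  define C2 where "C2 = coeff_int f (int k2 - int n + 1)"
  have rm: "strict_mono_on {..<2} r" using assms(1) unfolding strict_mono_on_def r_def by auto
  have cm: "strict_mono_on {..<2} c" using assms(6) unfolding strict_mono_on_def c_def by auto
  have Q0: "Q k 0 = \<alpha> ^ k" for k unfolding Q_def quasi_riordan_def geom_inv by simp
  have Qn: "Q k n = coeff_int f (int k - int n + 1)" for k
    unfolding Q_def by (rule qr_coeff[OF assms(3,6)])
  have "det (mat 2 2 (\<lambda>(i, j). Q (r i) (c j))) = \<alpha> ^ k1 * C2 - C1 * \<alpha> ^ k2"
    by (subst det2) (simp add: r_def c_def Q0 Qn C1_def C2_def)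
  also have "\<alpha> ^ k2 = \<alpha> ^ k1 * \<alpha> ^ (k2 - k1)" using assms(1)
    by (simp add: power_add[symmetric])
  also have "\<alpha> ^ k1 * C2 - C1 * (\<alpha> ^ k1 * \<alpha> ^ (k2 - k1)) = \<alpha> ^ k1 * (C2 - \<alpha> ^ (k2 - k1) * C1)"
    by (simp add: algebra_simps)
  also have "\<dots> < 0" using assms(2,7) unfolding C1_def C2_def
    by (intro mult_pos_neg) auto
  finally have "det (mat 2 2 (\<lambda>(i, j). Q (r i) (c j))) < 0" .
  then show "\<not> totally_positive (quasi_riordan (inverse (1 - fps_const \<alpha> * fps_X)) f)"
    using rm cm unfolding totally_positive_def Q_def[symmetric] by (meson not_le)
qed

end
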